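(* Let $n\ge 20$ be an integer. For all integers $p\ge 1$ and $q\ge 3$ with $p+q=n-2$, $$\lambda_{\min}\big(\mathcal U(p,q)^c\big)\ \ge\ \lambda_{\min}\Big(\mathcal U\big(\lceil (n-2)/2\rceil,\lfloor (n-2)/2\rfloor\big)^c\Big),$$ with equality if and only if $p=\lceil (n-2)/2\rceil$ and $q=\lfloor (n-2)/2\rfloor$.
   Context: All graphs are simple and finite. For a graph $G$, $\lambda_{\min}(G)$ denotes the least eigenvalue of the adjacency matrix $A(G)$, and $G^c$ denotes the complement of $G$. $K_{1,m}$ is the star with $m$ edges; its vertex of degree $m$ is the center and the others are pendant vertices. $S_m^3$ denotes the graph of order $m$ obtained from $K_{1,m-1}$ by adding one edge between two of its pendant vertices. For integers $p\ge 1$, $q\ge 3$, $\mathcal U(p,q)$ is the graph of order $p+q+2$ obtained from disjoint copies of $K_{1,p}$ and $S_{q+1}^3$ by adding one edge joining a pendant vertex of $K_{1,p}$ to a pendant (degree-one) vertex of $S_{q+1}^3$. *)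

theory Defs
  imports "Jordan_Normal_Form.Char_Poly"
begin

text \<open>A finite simple graph on vertex set {0..<N} is given by N and a
symmetric irreflexive adjacency predicate (only its values on {0..<N} matter).\<close>

definition adj_matrix :: "nat \<Rightarrow> (nat \<Rightarrow> nat \<Rightarrow> bool) \<Rightarrow> real mat" where
  "adj_matrix N E = mat N N (\<lambda>(i,j). if E i j then 1 else 0)"

definition compl_graph :: "(nat \<Rightarrow> nat \<Rightarrow> bool) \<Rightarrow> nat \<Rightarrow> nat \<Rightarrow> bool" where
  "compl_graph E i j \<longleftrightarrow> i \<noteq> j \<and> \<not> E i j"

text \<open>Least eigenvalue of the adjacency matrix (real symmetric, so all eigenvalues are real).\<close>
definition lambda_min :: "nat \<Rightarrow> (nat \<Rightarrow> nat \<Rightarrow> bool) \<Rightarrow> real" where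
  "lambda_min N E = Min {k. eigenvalue (adj_matrix N E) k}"

text \<open>U(p,q) on vertices {0..<p+q+2}: K_{1,p} has centre 0 and pendants 1..p;
S^3_{q+1} has centre p+1, pendants p+2..p+q+1, with extra edge between p+q and p+q+1;
the connecting edge joins pendant 1 of the star to the degree-one pendant p+2.\<close>
definition U_edge :: "nat \<Rightarrow> nat \<Rightarrow> nat \<Rightarrow> nat \<Rightarrow> bool" where
  "U_edge p q i j \<longleftrightarrow>
     (i = 0 \<and> 1 \<le> j \<and> j \<le> p) \<or>
     (i = p + 1 \<and> p + 2 \<le> j \<and> j \<le> p + q + 1) \<or>
     (i = p + q \<and> j = p + q + 1) \<or>
     (i = 1 \<and> j = p + 2)"

definition U_graph :: "nat \<Rightarrow> nat \<Rightarrow> nat \<Rightarrow> nat \<Rightarrow> bool" where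
  "U_graph p q i j \<longleftrightarrow> U_edge p q i j \<or> U_edge p q j i"

end

theory Submission
  imports Defs
begin


lemma mv_basic:
  fixes f :: "nat \<Rightarrow> real"
  assumes i: "i < N"
  shows "(adj_matrix N (compl_graph E) *\<^sub>v vec N f) $ i
         = (\<Sum>j<N. f j) - sum f {j. j < N \<and> (j = i \<or> E i j)}"
proof -
  have "(adj_matrix N (compl_graph E) *\<^sub>v vec N f) $ i
        = (\<Sum>j\<in>{0..<N}. (if compl_graph E i j then 1 else 0) * f j)"
    using i by (simp add: adj_matrix_def scalar_prod_def)
  also have "\<dots> = (\<Sum>j\<in>{0..<N}. f j - (if (j = i \<or> E i j) then f j else 0))"
    by (rule sum.cong) (auto simp: compl_graph_def)
  also have "\<dots> = (\<Sum>j<N. f j) - (\<Sum>j\<in>{0..<N}. (if (j = i \<or> E i j) then f j else 0))"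
    by (simp add: sum_subtractf atLeast0LessThan)
  also have "(\<Sum>j\<in>{0..<N}. (if (j = i \<or> E i j) then f j else 0)) = sum f {j \<in> {0..<N}. j = i \<or> E i j}"
    by (rule sum.inter_filter[symmetric]) simp
  also have "{j \<in> {0..<N}. j = i \<or> E i j} = {j. j < N \<and> (j = i \<or> E i j)}" by auto
  finally show ?thesis .
qed

lemma total_split:
  fixes f :: "nat \<Rightarrow> real" and p q :: nat
  assumes p: "p \<ge> 1" and q: "q \<ge> 3"
  shows "(\<Sum>j<p+q+2. f j) = f 0 + f 1 + sum f {2..p} + f (p+1) + f (p+2)
           + sum f {p+3..<p+q} + f (p+q) + f (p+q+1)"
proof -
  have a: "(\<Sum>j<p+q+2. f j) = (\<Sum>j<p+q. f j) + f (p+q) + f (p+q+1)"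
    by (simp add: numeral_2_eq_2)
  have b: "(\<Sum>j<p+q. f j) = (\<Sum>j<p+3. f j) + sum f {p+3..<p+q}"
    using q sum.atLeastLessThan_concat[of 0 "p+3" "p+q" f] by (simp add: atLeast0LessThan)
  have c: "(\<Sum>j<p+3. f j) = (\<Sum>j<p+1. f j) + f (p+1) + f (p+2)"
    by (simp add: numeral_3_eq_3)
  have d: "(\<Sum>j<p+1. f j) = (\<Sum>j<2. f j) + sum f {2..<p+1}"
    using p sum.atLeastLessThan_concat[of 0 2 "p+1" f] by (simp add: atLeast0LessThan)
  have e: "{2..<p+1} = {2..p}" by auto
  have g: "(\<Sum>j<2. f j) = f 0 + f 1" by (simp add: numeral_2_eq_2)
  show ?thesis unfolding a b c d e g by linarith
qed

lemma nb_sets: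
  fixes p q :: nat
  assumes p: "p \<ge> 1" and q: "q \<ge> 3"
  shows "{j. j < p+q+2 \<and> (j = 0 \<or> U_graph p q 0 j)} = {0,1} \<union> {2..p}"
  and "i \<in> {2..p} \<Longrightarrow> {j. j < p+q+2 \<and> (j = i \<or> U_graph p q i j)} = {0, i}"
  and "{j. j < p+q+2 \<and> (j = 1 \<or> U_graph p q 1 j)} = {0, 1, p+2}"
  and "{j. j < p+q+2 \<and> (j = p+1 \<or> U_graph p q (p+1) j)} = {p+1, p+2} \<union> {p+3..<p+q} \<union> {p+q, p+q+1}"
  and "{j. j < p+q+2 \<and> (j = p+2 \<or> U_graph p q (p+2) j)} = {1, p+1, p+2}"
  and "i \<in> {p+3..<p+q} \<Longrightarrow> {j. j < p+q+2 \<and> (j = i \<or> U_graph p q i j)} = {p+1, i}"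
  and "{j. j < p+q+2 \<and> (j = p+q \<or> U_graph p q (p+q) j)} = {p+1, p+q, p+q+1}"
  and "{j. j < p+q+2 \<and> (j = p+q+1 \<or> U_graph p q (p+q+1) j)} = {p+1, p+q, p+q+1}"
  using p q by (auto simp: U_graph_def U_edge_def)


lemma mv_types:
  fixes f :: "nat \<Rightarrow> real" and p q :: nat
  assumes p: "p \<ge> 1" and q: "q \<ge> 3"
  defines "A \<equiv> adj_matrix (p+q+2) (compl_graph (U_graph p q))"
    and "T \<equiv> (\<Sum>j<p+q+2. f j)"
  shows "(A *\<^sub>v vec (p+q+2) f) $ 0 = T - (f 0 + f 1 + sum f {2..p})"
  and "i \<in> {2..p} \<Longrightarrow> (A *\<^sub>v vec (p+q+2) f) $ i = T - (f 0 + f i)"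
  and "(A *\<^sub>v vec (p+q+2) f) $ 1 = T - (f 0 + f 1 + f (p+2))"
  and "(A *\<^sub>v vec (p+q+2) f) $ (p+1) = T - (f (p+1) + f (p+2) + sum f {p+3..<p+q} + f (p+q) + f (p+q+1))"
  and "(A *\<^sub>v vec (p+q+2) f) $ (p+2) = T - (f 1 + f (p+1) + f (p+2))"
  and "i \<in> {p+3..<p+q} \<Longrightarrow> (A *\<^sub>v vec (p+q+2) f) $ i = T - (f (p+1) + f i)"
  and "(A *\<^sub>v vec (p+q+2) f) $ (p+q) = T - (f (p+1) + f (p+q) + f (p+q+1))"
  and "(A *\<^sub>v vec (p+q+2) f) $ (p+q+1) = T - (f (p+1) + f (p+q) + f (p+q+1))"
proof -
  note mb = mv_basic[of _ "p+q+2" "U_graph p q" f, folded A_def T_def]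
  note ns = nb_sets[OF p q]
  show "(A *\<^sub>v vec (p+q+2) f) $ 0 = T - (f 0 + f 1 + sum f {2..p})"
  proof -
    have "sum f ({0,1} \<union> {2..p}) = f 0 + f 1 + sum f {2..p}"
      by (subst sum.union_disjoint) auto
    thus ?thesis using mb[of 0] ns(1) by simp
  qed
  show "i \<in> {2..p} \<Longrightarrow> (A *\<^sub>v vec (p+q+2) f) $ i = T - (f 0 + f i)"
  proof -
    assume i: "i \<in> {2..p}"
    have "i < p+q+2" using i by auto
    thus ?thesis using mb[of i] ns(2)[OF i] i by simp
  qed
  show "(A *\<^sub>v vec (p+q+2) f) $ 1 = T - (f 0 + f 1 + f (p+2))"
    using mb[of 1] ns(3) by simp
  show "(A *\<^sub>v vec (p+q+2) f) $ (p+1) = T - (f (p+1) + f (p+2) + sum f {p+3..<p+q} + f (p+q) + f (p+q+1))"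
  proof -
    have "sum f ({p+1, p+2} \<union> {p+3..<p+q} \<union> {p+q, p+q+1}) = f (p+1) + f (p+2) + sum f {p+3..<p+q} + f (p+q) + f (p+q+1)"
      using q by (subst sum.union_disjoint; (subst sum.union_disjoint)?) auto
    thus ?thesis using mb[of "p+1"] ns(4) by simp
  qed
  show "(A *\<^sub>v vec (p+q+2) f) $ (p+2) = T - (f 1 + f (p+1) + f (p+2))"
    using mb[of "p+2"] ns(5) p q by (simp add: add.assoc)
  show "i \<in> {p+3..<p+q} \<Longrightarrow> (A *\<^sub>v vec (p+q+2) f) $ i = T - (f (p+1) + f i)"
  proof -
    assume i: "i \<in> {p+3..<p+q}"
    have "i < p+q+2" using i by auto
    thus ?thesis using mb[of i] ns(6)[OF i] i by simp
  qed
  show "(A *\<^sub>v vec (p+q+2) f) $ (p+q) = T - (f (p+1) + f (p+q) + f (p+q+1))"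
    using mb[of "p+q"] ns(7) q by (simp add: algebra_simps)
  show "(A *\<^sub>v vec (p+q+2) f) $ (p+q+1) = T - (f (p+1) + f (p+q) + f (p+q+1))"
    using mb[of "p+q+1"] ns(8) q by (simp add: algebra_simps)
qed



definition Fp :: "real \<Rightarrow> real \<Rightarrow> real \<Rightarrow> real" where
"Fp p q x = x^7 + (6-p-q)*x^6 + (16-6*(p+q))*x^5 + (2*p*q-12*p-12*q+20)*x^4 + (7*p*q-11*p-7*q+1)*x^3 + (4*p*q+6*q-20)*x^2 + (-4*p*q+11*p+7*q-13)*x + (8-2*p-2*q)"

definition R1T :: "real \<Rightarrow> real \<Rightarrow> real \<Rightarrow> real" where "R1T p q y = (0 - y^6 + y^5*p - 7*y^5 + 6*y^4*p + y^4*q - 20*y^4 - y^3*p*q + 13*y^3*p + 5*y^3*q - 30*y^3 - 4*y^2*p*q + 14*y^2*p + 8*y^2*q - 22*y^2 - 4*y*p*q + 7*y*p + 3*y*q - y - 2*p - 2*q + 8)"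
definition R1a :: "real \<Rightarrow> real \<Rightarrow> real \<Rightarrow> real" where "R1a p q y = (y^7 + 8*y^6 - y^5*p - y^5*q + 26*y^5 - 6*y^4*p - 6*y^4*q + 46*y^4 + y^3*p*q - 13*y^3*p - 13*y^3*q + 47*y^3 + 4*y^2*p*q - 14*y^2*p - 12*y^2*q + 22*y^2 + 4*y*p*q - 7*y*p - 3*y*q - 3*y + 2*p + 2*q - 8)"
definition R2T :: "real \<Rightarrow> real \<Rightarrow> real \<Rightarrow> real" where "R2T p q y = (0 - y^5 + y^4*p + y^4*q - 6*y^4 - y^3*p*q + 5*y^3*p + 5*y^3*q - 16*y^3 - 4*y^2*p*q + 10*y^2*p + 8*y^2*q - 20*y^2 - 4*y*p*q + 7*y*p + 3*y*q - 6*y - 2*p - 2*q + 6)"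
definition R2a :: "real \<Rightarrow> real \<Rightarrow> real \<Rightarrow> real" where "R2a p q y = (y^6 - y^5*q + 7*y^5 - y^4*p - 6*y^4*q + 22*y^4 + y^3*p*q - 5*y^3*p - 13*y^3*q + 36*y^3 + 4*y^2*p*q - 10*y^2*p - 12*y^2*q + 26*y^2 + 4*y*p*q - 7*y*p - 3*y*q + y + 2*p + 2*q - 8)"

lemma core_T:
 fixes y p q T a c d e g SB SF :: real
 assumes "(y+1)*SB = (p-1)*(T-a)"
 and "T - a - c - SB = y*a"
 and "T - c - a - d = y*c"
 and "T - d - c - e = y*d"
 and "T - e - d - SF - g - g = y*e"
 and "T - g - e - g = y*g"
 and "(y+1)*SF = (q-3)*(T-e)"
 and "T = a + c + SB + e + d + SF + g + g"
 shows "(y+1)^2*(y+2)*Fp p q y * T = 0"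
  using assms unfolding Fp_def by Groebner_Basis.algebra

lemma core_a:
 fixes y p q T a c d e g SB SF :: real
 assumes "(y+1)*SB = (p-1)*(T-a)"
 and "T - a - c - SB = y*a"
 and "T - c - a - d = y*c"
 and "T - d - c - e = y*d"
 and "T - e - d - SF - g - g = y*e"
 and "T - g - e - g = y*g"
 and "(y+1)*SF = (q-3)*(T-e)"
 and "T = a + c + SB + e + d + SF + g + g"
 shows "(y+1)^2*(y+2)*Fp p q y * a = 0"
  using assms unfolding Fp_def by Groebner_Basis.algebra

lemma back1:
 fixes y p q T a SB c d e SF g :: real
 assumes "(y+1)*SB = (p-1)*(T-a)"
 "c = T - a - SB - y*a"
 "d = T - c - a - y*c"
 "e = T - d - c - y*d"
 "(y+1)*SF = (q-3)*(T-e)"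
 "(y+2)*g = (T-e)"
 shows "(y+1)^2*(y+2)*(T - e - d - SF - g - g - y*e) = R1T p q y * T + R1a p q y * a"
  using assms unfolding R1T_def R1a_def by Groebner_Basis.algebra

lemma back2:
 fixes y p q T a SB c d e SF g :: real
 assumes "(y+1)*SB = (p-1)*(T-a)"
 "c = T - a - SB - y*a"
 "d = T - c - a - y*c"
 "e = T - d - c - y*d"
 "(y+1)*SF = (q-3)*(T-e)"
 "(y+2)*g = (T-e)"
 shows "(y+1)^2*(y+2)*(T - a - c - SB - e - d - SF - g - g) = R2T p q y * T + R2a p q y * a"
  using assms unfolding R2T_def R2a_def by Groebner_Basis.algebra

lemma det_id: "R1T p q y * R2a p q y - R1a p q y * R2T p q y = -((y+1)^2*(y+2)*Fp p q y)"
  unfolding R1T_def R1a_def R2T_def R2a_def Fp_def by Groebner_Basis.algebra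




lemma exists_null2:
  fixes \<alpha> \<beta> \<gamma> \<delta> :: real
  assumes "\<alpha>*\<delta> - \<beta>*\<gamma> = 0"
  shows "\<exists>T a. (T \<noteq> 0 \<or> a \<noteq> 0) \<and> \<alpha>*T + \<beta>*a = 0 \<and> \<gamma>*T + \<delta>*a = 0"
proof (cases "\<alpha> \<noteq> 0 \<or> \<beta> \<noteq> 0")
  case True
  show ?thesis
    by (rule exI[of _ \<beta>], rule exI[of _ "-\<alpha>"]) (use True assms in \<open>auto simp: algebra_simps\<close>)
next
  case False
  show ?thesis
  proof (cases "\<gamma> \<noteq> 0 \<or> \<delta> \<noteq> 0")
    case True
    show ?thesis
      by (rule exI[of _ \<delta>], rule exI[of _ "-\<gamma>"]) (use True False in \<open>auto simp: algebra_simps\<close>)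
  next
    case False2: False
    show ?thesis by (rule exI[of _ 1], rule exI[of _ 0]) (use False False2 in auto)
  qed
qed

lemma cover:
  fixes i p q :: nat
  assumes "i < p+q+2"
  shows "i = 0 \<or> i = 1 \<or> i \<in> {2..p} \<or> i = p+1 \<or> i = p+2 \<or> i \<in> {p+3..<p+q} \<or> i = p+q \<or> i = p+q+1"
  using assms by auto

lemma card_real1: "p \<ge> 1 \<Longrightarrow> real (card {2..p}) = real p - 1"
  by (simp add: of_nat_diff)
lemma card_real2: "q \<ge> 3 \<Longrightarrow> real (card {p+3..<p+q}) = real q - 3"
  by (simp add: of_nat_diff)

lemma eig_fwd:
  fixes p q :: nat and y :: real
  assumes p: "p \<ge> 1" and q: "q \<ge> 3" and y: "y < -4"
    and ev: "eigenvalue (adj_matrix (p+q+2) (compl_graph (U_graph p q))) y"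
  shows "Fp (real p) (real q) y = 0"
proof (rule ccontr)
  assume nF: "Fp (real p) (real q) y \<noteq> 0"
  define N where "N = p+q+2"
  define A where "A = adj_matrix (p+q+2) (compl_graph (U_graph p q))"
  from ev obtain v where vc: "v \<in> carrier_vec N" and vnz: "v \<noteq> 0\<^sub>v N" and Av: "A *\<^sub>v v = y \<cdot>\<^sub>v v"
    unfolding eigenvalue_def eigenvector_def A_def N_def adj_matrix_def by auto
  define f where "f = (\<lambda>j. v $ j)"
  have vv: "v = vec N f" using vc unfolding f_def by auto
  have eq: "(A *\<^sub>v vec (p+q+2) f) $ i = y * f i" if "i < p+q+2" for i
    using Av that vc unfolding vv N_def by (metis index_smult_vec(1) dim_vec index_vec)
  define T where "T = (\<Sum>j<p+q+2. f j)"
  note mt = mv_types[OF p q, where f=f, folded A_def T_def]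
  define a c d e g h SB SF where "a = f 0" "c = f 1" "d = f (p+2)" "e = f (p+1)"
    "g = f (p+q)" "h = f (p+q+1)" "SB = sum f {2..p}" "SF = sum f {p+3..<p+q}"
  have y1: "y + 1 \<noteq> 0" "y + 2 \<noteq> 0" "y \<noteq> 0" using y by auto
  have pend1: "f i = (T - a)/(y+1)" if i: "i \<in> {2..p}" for i
  proof -
    have "T - (a + f i) = y * f i" using mt(2)[OF i] eq[of i] i unfolding a_c_d_e_g_h_SB_SF_def by auto
    thus ?thesis using y1 by (simp add: field_simps)
  qed
  have pend2: "f i = (T - e)/(y+1)" if i: "i \<in> {p+3..<p+q}" for i
  proof -
    have "T - (e + f i) = y * f i" using mt(6)[OF i] eq[of i] i unfolding a_c_d_e_g_h_SB_SF_def by auto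
    thus ?thesis using y1 by (simp add: field_simps)
  qed
  have hSB: "(y+1)*SB = (real p - 1)*(T-a)"
  proof -
    have "SB = real (card {2..p}) * ((T - a)/(y+1))"
      unfolding a_c_d_e_g_h_SB_SF_def(7) using pend1 by simp
    thus ?thesis using y1 card_real1[OF p] by (simp add: field_simps)
  qed
  have hSF: "(y+1)*SF = (real q - 3)*(T-e)"
  proof -
    have "SF = real (card {p+3..<p+q}) * ((T - e)/(y+1))"
      unfolding a_c_d_e_g_h_SB_SF_def(8) using pend2 by simp
    thus ?thesis using y1 card_real2[OF q, of p] by (simp add: field_simps)
  qed
  have E0: "T - a - c - SB = y*a" using mt(1) eq[of 0] q unfolding a_c_d_e_g_h_SB_SF_def by (auto simp: algebra_simps)
  have E1: "T - c - a - d = y*c" using mt(3) eq[of 1] q unfolding a_c_d_e_g_h_SB_SF_def by (auto simp: algebra_simps)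
  have Ep2: "T - d - c - e = y*d" using mt(5) eq[of "p+2"] q unfolding a_c_d_e_g_h_SB_SF_def by (auto simp: algebra_simps)
  have Ep1': "T - e - d - SF - g - h = y*e" using mt(4) eq[of "p+1"] q unfolding a_c_d_e_g_h_SB_SF_def by (auto simp: algebra_simps)
  have Eg': "T - g - e - h = y*g" using mt(7) eq[of "p+q"] q q unfolding a_c_d_e_g_h_SB_SF_def by (auto simp: algebra_simps)
  have Eh': "T - h - e - g = y*h" using mt(8) eq[of "p+q+1"] q unfolding a_c_d_e_g_h_SB_SF_def by (auto simp: algebra_simps)
  have "y*g = y*h" using Eg' Eh' by linarith
  hence gh: "h = g" using y1 by simp
  have Ep1: "T - e - d - SF - g - g = y*e" using Ep1' gh by simp
  have Eg: "T - g - e - g = y*g" using Eg' gh by simp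
  have ET: "T = a + c + SB + e + d + SF + g + g"
    using total_split[OF p q, of f] gh unfolding T_def a_c_d_e_g_h_SB_SF_def by simp
  have nz: "(y+1)^2*(y+2)*Fp (real p) (real q) y \<noteq> 0" using nF y1 by simp
  have T0: "T = 0" using core_T[OF hSB E0 E1 Ep2 Ep1 Eg hSF ET] nz by simp
  have a0: "a = 0" using core_a[OF hSB E0 E1 Ep2 Ep1 Eg hSF ET] nz by simp
  have SB0: "SB = 0" using hSB T0 a0 y1 by simp
  have c0: "c = 0" using E0 T0 a0 SB0 by simp
  have d0: "d = 0" using E1 T0 a0 c0 by simp
  have e0: "e = 0" using Ep2 T0 c0 d0 by simp
  have g0: "g = 0" using Eg T0 e0 y1 by (simp add: algebra_simps) (metis add_eq_0_iff2 mult_eq_0_iff y1(2) add.commute mult.commute mult_2 distrib_right)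
  have "f i = 0" if i: "i < N" for i
    using cover[of i p q] i pend1[of i] pend2[of i] T0 a0 c0 d0 e0 g0 gh
    unfolding N_def a_c_d_e_g_h_SB_SF_def by auto
  hence "v = 0\<^sub>v N" using vc unfolding vv by auto
  with vnz show False by simp
qed




lemma eig_bwd:
  fixes p q :: nat and y :: real
  assumes p: "p \<ge> 1" and q: "q \<ge> 3" and y: "y < -4"
    and F0: "Fp (real p) (real q) y = 0"
  shows "eigenvalue (adj_matrix (p+q+2) (compl_graph (U_graph p q))) y"
proof -
  define N where "N = p+q+2"
  define A where "A = adj_matrix (p+q+2) (compl_graph (U_graph p q))"
  have y1: "y + 1 \<noteq> 0" "y + 2 \<noteq> 0" "y \<noteq> 0" using y by auto
  have "R1T p q y * R2a p q y - R1a p q y * R2T p q y = 0"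
    using det_id[of p q y] F0 by simp
  from exists_null2[OF this] obtain T a where Ta: "T \<noteq> 0 \<or> a \<noteq> 0"
    and r1: "R1T p q y * T + R1a p q y * a = 0" and r2: "R2T p q y * T + R2a p q y * a = 0"
    by blast
  define SB where "SB = (real p - 1)*(T-a)/(y+1)"
  define c where "c = T - a - SB - y*a"
  define d where "d = T - c - a - y*c"
  define e where "e = T - d - c - y*d"
  define SF where "SF = (real q - 3)*(T-e)/(y+1)"
  define g where "g = (T-e)/(y+2)"
  have hSB: "(y+1)*SB = (real p - 1)*(T-a)" unfolding SB_def using y1 by simp
  have hSF: "(y+1)*SF = (real q - 3)*(T-e)" unfolding SF_def using y1 by simp
  have hg: "(y+2)*g = T - e" unfolding g_def using y1 by simp
  have Ep1: "T - e - d - SF - g - g - y*e = 0"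
    using back1[OF hSB c_def d_def e_def hSF hg] r1 y1 by simp
  have ET: "T - a - c - SB - e - d - SF - g - g = 0"
    using back2[OF hSB c_def d_def e_def hSF hg] r2 y1 by simp
  define f where "f = (\<lambda>i::nat. if i = 0 then a else if i = 1 then c else if i \<le> p then (T-a)/(y+1)
     else if i = p+1 then e else if i = p+2 then d else if i < p+q then (T-e)/(y+1) else g)"
  have f0: "f 0 = a" and f1: "f 1 = c" and fp1: "f (p+1) = e" and fp2: "f (p+2) = d"
    and fg1: "f (p+q) = g" and fg2: "f (p+q+1) = g"
    using p q unfolding f_def by auto
  have fpend1: "f i = (T-a)/(y+1)" if "i \<in> {2..p}" for i using that unfolding f_def by auto
  have fpend2: "f i = (T-e)/(y+1)" if "i \<in> {p+3..<p+q}" for i using that unfolding f_def by auto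
  have sSB: "sum f {2..p} = SB"
  proof -
    have "sum f {2..p} = real (card {2..p}) * ((T-a)/(y+1))" using fpend1 by simp
    thus ?thesis unfolding SB_def card_real1[OF p] by simp
  qed
  have sSF: "sum f {p+3..<p+q} = SF"
  proof -
    have "sum f {p+3..<p+q} = real (card {p+3..<p+q}) * ((T-e)/(y+1))" using fpend2 by simp
    thus ?thesis unfolding SF_def card_real2[OF q] by simp
  qed
  have tot: "(\<Sum>j<p+q+2. f j) = T"
    using total_split[OF p q, of f] f0 f1 fp1 fp2 fg1 fg2 sSB sSF ET by simp
  note mt = mv_types[OF p q, where f=f, folded A_def, unfolded tot]
  have eqs: "(A *\<^sub>v vec N f) $ i = y * f i" if i: "i < N" for i
  proof -
    from cover[of i p q] i consider "i = 0" | "i = 1" | "i \<in> {2..p}" | "i = p+1" | "i = p+2"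
      | "i \<in> {p+3..<p+q}" | "i = p+q" | "i = p+q+1" unfolding N_def by blast
    then show ?thesis
    proof cases
      case 1 thus ?thesis using mt(1) f0 f1 sSB unfolding N_def c_def by (simp add: algebra_simps)
    next
      case 2 thus ?thesis using mt(3) f0 f1 fp2 unfolding N_def d_def by (simp add: algebra_simps)
    next
      case 3
      have X: "f i + y * f i = T - a" using fpend1[OF 3] y1 by (simp add: field_simps)
      show ?thesis using mt(2)[OF 3] f0 X unfolding N_def by linarith
    next
      case 4 thus ?thesis using mt(4) fp1 fp2 sSF fg1 fg2 Ep1 unfolding N_def by (simp add: algebra_simps)
    next
      case 5 thus ?thesis using mt(5) f1 fp1 fp2 unfolding N_def e_def by (simp add: algebra_simps)
    next
      case 6
      have X: "f i + y * f i = T - e" using fpend2[OF 6] y1 by (simp add: field_simps)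
      show ?thesis using mt(6)[OF 6] fp1 X unfolding N_def by linarith
    next
      case 7 thus ?thesis using mt(7) fp1 fg1 fg2 hg unfolding N_def by (simp add: algebra_simps)
    next
      case 8 thus ?thesis using mt(8) fp1 fg1 fg2 hg unfolding N_def by (simp add: algebra_simps)
    qed
  qed
  have nz: "vec N f \<noteq> 0\<^sub>v N"
  proof
    assume z: "vec N f = 0\<^sub>v N"
    have fz: "f i = 0" if "i < N" for i
      using arg_cong[OF z, of "\<lambda>v. v $ i"] that by simp
    hence "(\<Sum>j<p+q+2. f j) = 0" unfolding N_def by simp
    hence "T = 0" using tot by simp
    moreover have "a = 0" using fz[of 0] f0 unfolding N_def by simp
    ultimately show False using Ta by simp
  qed
  have "eigenvector A (vec N f) y"
    unfolding eigenvector_def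
    using nz eqs by (auto simp: A_def N_def adj_matrix_def)
  thus ?thesis unfolding eigenvalue_def A_def by blast
qed




lemma eig0:
  fixes p q :: nat
  assumes p: "p \<ge> 1" and q: "q \<ge> 3"
  shows "eigenvalue (adj_matrix (p+q+2) (compl_graph (U_graph p q))) 0"
proof -
  define N where "N = p+q+2"
  define A where "A = adj_matrix (p+q+2) (compl_graph (U_graph p q))"
  define f :: "nat \<Rightarrow> real" where "f = (\<lambda>j. if j = p+q then 1 else if j = p+q+1 then -1 else 0)"
  have s1: "sum f {2..p} = 0" by (rule sum.neutral) (use q in \<open>auto simp: f_def\<close>)
  have s2: "sum f {p+3..<p+q} = 0" by (rule sum.neutral) (use q in \<open>auto simp: f_def\<close>)
  have tot: "(\<Sum>j<p+q+2. f j) = 0"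
    using total_split[OF p q, of f] s1 s2 p q by (simp add: f_def N_def)
  note mt = mv_types[OF p q, where f=f, folded A_def, unfolded tot]
  have eqs: "(A *\<^sub>v vec N f) $ i = 0 * f i" if i: "i < N" for i
  proof -
    from cover[of i p q] i consider "i = 0" | "i = 1" | "i \<in> {2..p}" | "i = p+1" | "i = p+2"
      | "i \<in> {p+3..<p+q}" | "i = p+q" | "i = p+q+1" unfolding N_def by blast
    then show ?thesis
    proof cases
      case 1 thus ?thesis using mt(1) s1 p q by (simp add: f_def N_def)
    next
      case 2 thus ?thesis using mt(3) p q by (simp add: f_def N_def)
    next
      case 3 thus ?thesis using mt(2)[OF 3] p q by (simp add: f_def N_def)
    next
      case 4 thus ?thesis using mt(4) s2 p q by (simp add: f_def N_def)
    next
      case 5 thus ?thesis using mt(5) p q by (simp add: f_def N_def)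
    next
      case 6 thus ?thesis using mt(6)[OF 6] p q by (simp add: f_def N_def)
    next
      case 7 thus ?thesis using mt(7) p q by (simp add: f_def N_def)
    next
      case 8 thus ?thesis using mt(8) p q by (simp add: f_def N_def)
    qed
  qed
  have nz: "vec N f \<noteq> 0\<^sub>v N"
  proof
    assume z: "vec N f = 0\<^sub>v N"
    have "f (p+q) = 0" using arg_cong[OF z, of "\<lambda>v. v $ (p+q)"] unfolding N_def by simp
    thus False by (simp add: f_def)
  qed
  have "eigenvector A (vec N f) 0"
    unfolding eigenvector_def
    using nz eqs by (auto simp: A_def N_def adj_matrix_def)
  thus ?thesis unfolding eigenvalue_def A_def by blast
qed

lemma finite_eig:
  fixes A :: "real mat"
  assumes A: "A \<in> carrier_mat n n"
  shows "finite {k. eigenvalue A k}"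
proof -
  have "char_poly A \<noteq> 0" using degree_monic_char_poly[OF A] by auto
  hence "finite {k. poly (char_poly A) k = 0}" by (rule poly_roots_finite)
  thus ?thesis using eigenvalue_root_char_poly[OF A] by simp
qed

lemma term_bd:
  fixes c z :: real
  assumes "\<bar>z\<bar> \<ge> 1" "i \<le> 6"
  shows "c * z^i \<le> \<bar>c\<bar> * z^6"
proof -
  have h: "\<bar>z\<bar>^i \<le> \<bar>z\<bar>^6" using assms by (intro power_increasing) auto
  have h6: "\<bar>z\<bar>^6 = z^6" by (simp add: power_even_abs)
  have "c * z^i \<le> \<bar>c * z^i\<bar>" by simp
  also have "\<dots> = \<bar>c\<bar> * \<bar>z\<bar>^i" by (simp add: abs_mult power_abs)
  also have "\<dots> \<le> \<bar>c\<bar> * \<bar>z\<bar>^6" using h by (intro mult_left_mono) auto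
  finally show ?thesis unfolding h6 .
qed

lemma poly7_neg:
  fixes c0 c1 c2 c3 c4 c5 c6 z :: real
  assumes z1: "z \<le> -1" and zS: "z + (\<bar>c0\<bar>+\<bar>c1\<bar>+\<bar>c2\<bar>+\<bar>c3\<bar>+\<bar>c4\<bar>+\<bar>c5\<bar>+\<bar>c6\<bar>) < 0"
  shows "z^7 + c6*z^6 + c5*z^5 + c4*z^4 + c3*z^3 + c2*z^2 + c1*z + c0 < 0"
proof -
  have a: "\<bar>z\<bar> \<ge> 1" using z1 by simp
  have b6: "c6*z^6 \<le> \<bar>c6\<bar>*z^6" using term_bd[OF a, of 6 c6] by simp
  have b5: "c5*z^5 \<le> \<bar>c5\<bar>*z^6" using term_bd[OF a, of 5 c5] by simp
  have b4: "c4*z^4 \<le> \<bar>c4\<bar>*z^6" using term_bd[OF a, of 4 c4] by simp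
  have b3: "c3*z^3 \<le> \<bar>c3\<bar>*z^6" using term_bd[OF a, of 3 c3] by simp
  have b2: "c2*z^2 \<le> \<bar>c2\<bar>*z^6" using term_bd[OF a, of 2 c2] by simp
  have b1: "c1*z \<le> \<bar>c1\<bar>*z^6" using term_bd[OF a, of 1 c1] by simp
  have b0: "c0 \<le> \<bar>c0\<bar>*z^6" using term_bd[OF a, of 0 c0] by simp
  have pos: "z^6 > 0" using z1 by (simp add: zero_less_power_eq)
  have "z^7 + (\<bar>c0\<bar>+\<bar>c1\<bar>+\<bar>c2\<bar>+\<bar>c3\<bar>+\<bar>c4\<bar>+\<bar>c5\<bar>+\<bar>c6\<bar>)*z^6
        = z^6 * (z + (\<bar>c0\<bar>+\<bar>c1\<bar>+\<bar>c2\<bar>+\<bar>c3\<bar>+\<bar>c4\<bar>+\<bar>c5\<bar>+\<bar>c6\<bar>))"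
    by Groebner_Basis.algebra
  also have "\<dots> < 0" using pos zS by (simp add: mult_pos_neg)
  finally have "z^7 + (\<bar>c0\<bar>+\<bar>c1\<bar>+\<bar>c2\<bar>+\<bar>c3\<bar>+\<bar>c4\<bar>+\<bar>c5\<bar>+\<bar>c6\<bar>)*z^6 < 0" .
  thus ?thesis using b0 b1 b2 b3 b4 b5 b6 by (simp add: algebra_simps)
qed

lemma Fp_neg_below: "\<exists>z<y. Fp p q z < 0"
proof -
  define S where "S = \<bar>8-2*p-2*q\<bar> + \<bar>-4*p*q+11*p+7*q-13\<bar> + \<bar>4*p*q+6*q-20\<bar> + \<bar>7*p*q-11*p-7*q+1\<bar>
     + \<bar>2*p*q-12*p-12*q+20\<bar> + \<bar>16-6*(p+q)\<bar> + \<bar>6-p-q\<bar>"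
  define z where "z = min y (-1) - S - 1"
  have S0: "S \<ge> 0" unfolding S_def by simp
  have "Fp p q z < 0" unfolding Fp_def
    by (rule poly7_neg) (use S0 in \<open>auto simp: z_def S_def\<close>)
  moreover have "z < y" using S0 by (simp add: z_def)
  ultimately show ?thesis by blast
qed

lemma Fp_cont: "continuous_on A (Fp p q)"
  unfolding Fp_def by (intro continuous_intros)

lemma Fp_diff:
  assumes "p + q = p' + q'"
  shows "Fp p q x - Fp p' q' x = (p - p')*((q - p')*(2*x^4+7*x^3+4*x^2-4*x) + (4*x-6*x^2-4*x^3))"
proof -
  have q: "q = p' + q' - p" using assms by simp
  show ?thesis unfolding Fp_def q by Groebner_Basis.algebra
qed

lemma HL_pos:
  fixes x :: real assumes x: "x < -4"
  shows "2*x^4+7*x^3+4*x^2-4*x > 0" and "4*x-6*x^2-4*x^3 > 0"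
    and "(2*x^4+7*x^3+4*x^2-4*x) - (4*x-6*x^2-4*x^3) > 0"
proof -
  have h1: "2*x^4+7*x^3+4*x^2-4*x = (x*(2*x-1))*(x+2)^2" by Groebner_Basis.algebra
  have h2: "4*x-6*x^2-4*x^3 = (-2*x)*((2*x-1)*(x+2))" by Groebner_Basis.algebra
  have h3: "(2*x^4+7*x^3+4*x^2-4*x) - (4*x-6*x^2-4*x^3) = (x*(x+4))*((2*x-1)*(x+2))" by Groebner_Basis.algebra
  have a: "x*(2*x-1) > 0" using x by (intro mult_neg_neg) auto
  have b: "(x+2)^2 > 0" using x by simp
  have c: "(2*x-1)*(x+2) > 0" using x by (intro mult_neg_neg) auto
  have d: "x*(x+4) > 0" using x by (intro mult_neg_neg) auto
  show "2*x^4+7*x^3+4*x^2-4*x > 0" unfolding h1 using a b by simp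
  have e: "-2*x > 0" using x by simp
  show "4*x-6*x^2-4*x^3 > 0" unfolding h2 using mult_pos_pos[OF e c] by simp
  show "(2*x^4+7*x^3+4*x^2-4*x) - (4*x-6*x^2-4*x^3) > 0" unfolding h3 using c d by simp
qed

lemma Fp_compare:
  fixes p q p' q' :: nat and x :: real
  assumes x: "x < -4" and s: "p + q = p' + q'" and ne: "p \<noteq> p'"
    and b1: "q' \<le> p'" and b2: "p' \<le> q' + 1"
  shows "Fp (real p) (real q) x < Fp (real p') (real q') x"
proof -
  define H where "H = 2*x^4+7*x^3+4*x^2-4*x"
  define L where "L = 4*x-6*x^2-4*x^3"
  have H: "H > 0" and L: "L > 0" and HL: "H - L > 0" using HL_pos[OF x] unfolding H_def L_def by auto
  have sr: "real p + real q = real p' + real q'" using s by (metis of_nat_add)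
  have d: "Fp (real p) (real q) x - Fp (real p') (real q') x = (real p - real p')*((real q - real p')*H + L)"
    unfolding H_def L_def by (rule Fp_diff[OF sr])
  have "(real p - real p')*((real q - real p')*H + L) < 0"
  proof (cases "p > p'")
    case True
    have k: "real q - real p' \<le> -1" using True s b1 by linarith
    have "(real q - real p')*H \<le> -1 * H" using k H by (intro mult_right_mono) auto
    hence "(real q - real p')*H + L < 0" using HL by linarith
    moreover have "real p - real p' > 0" using True by simp
    ultimately show ?thesis by (simp add: mult_pos_neg)
  next
    case False
    hence lt: "p < p'" using ne by simp
    have k: "real q - real p' \<ge> 0" using lt s b2 by linarith
    have "(real q - real p')*H \<ge> 0" using k H by simp
    hence "(real q - real p')*H + L > 0" using L by linarith
    moreover have "real p - real p' < 0" using lt by simp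
    ultimately show ?thesis by (simp add: mult_neg_pos)
  qed
  thus ?thesis using d by linarith
qed

lemma Fp_at_m4: "Fp p q (-4) = 144*p*q - 366*p - 510*q - 3396"
  unfolding Fp_def by (simp add: algebra_simps)

lemma Fstar_pos:
  fixes ps qs :: nat
  assumes "qs \<ge> 9" "qs \<le> ps" "ps \<le> qs + 1"
  shows "Fp (real ps) (real qs) (-4) > 0"
proof -
  have k: "real qs * (real qs - 9) \<ge> 0" using assms by simp
  consider "ps = qs" | "ps = qs + 1" using assms by linarith
  thus ?thesis
  proof cases
    case 1
    have "144*real qs*real qs - 366*real qs - 510*real qs - 3396 = 144*(real qs*(real qs - 9)) + 420*real qs - 3396"
      by (simp add: algebra_simps)
    moreover have "420*real qs \<ge> 3780" using assms by simp
    ultimately show ?thesis unfolding Fp_at_m4 1 using k by linarith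
  next
    case 2
    have "144*real (qs+1)*real qs - 366*real (qs+1) - 510*real qs - 3396 = 144*(real qs*(real qs - 9)) + 564*real qs - 3762"
      by (simp add: algebra_simps)
    moreover have "564*real qs \<ge> 5076" using assms by simp
    ultimately show ?thesis unfolding Fp_at_m4 2 using k by linarith
  qed
qed




lemma root_between:
  assumes "a \<le> b" "Fp p q a \<le> 0" "0 \<le> Fp p q b"
  shows "\<exists>r. a \<le> r \<and> r \<le> b \<and> Fp p q r = 0"
  using IVT'[of "Fp p q" a 0 b, OF assms(2) assms(3) assms(1) Fp_cont] by blast

theorem lemma2p2:
  fixes n p q :: nat
  assumes "n \<ge> 20" and "p \<ge> 1" and "q \<ge> 3" and "p + q = n - 2"
  shows "lambda_min n (compl_graph (U_graph p q))
           \<ge> lambda_min n (compl_graph (U_graph ((n - 1) div 2) ((n - 2) div 2)))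
       \<and> (lambda_min n (compl_graph (U_graph p q))
           = lambda_min n (compl_graph (U_graph ((n - 1) div 2) ((n - 2) div 2)))
          \<longleftrightarrow> p = (n - 1) div 2 \<and> q = (n - 2) div 2)"
proof -
  define ps where "ps = (n - 1) div 2"
  define qs where "qs = (n - 2) div 2"
  have n1: "n = p + q + 2" using assms by simp
  have n2: "n = ps + qs + 2" unfolding ps_def qs_def using assms(1) by linarith
  have qs9: "qs \<ge> 9" unfolding qs_def using assms(1) by linarith
  have b1: "qs \<le> ps" and b2: "ps \<le> qs + 1" unfolding ps_def qs_def using assms(1) by linarith+
  have ps1: "ps \<ge> 1" and qs3: "qs \<ge> 3" using qs9 b1 by linarith+
  have sum_eq: "p + q = ps + qs" using n1 n2 by simp
  define S where "S = (\<lambda>p q. {k. eigenvalue (adj_matrix (p+q+2) (compl_graph (U_graph p q))) k})"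
  have lm: "lambda_min n (compl_graph (U_graph p q)) = Min (S p q)"
    unfolding lambda_min_def S_def n1 ..
  have lms: "lambda_min n (compl_graph (U_graph ps qs)) = Min (S ps qs)"
    unfolding lambda_min_def S_def n2 ..
  have fin: "finite (S a b)" for a b
    unfolding S_def by (rule finite_eig[of _ "a+b+2"]) (simp add: adj_matrix_def)
  have zero: "0 \<in> S a b" if "a \<ge> 1" "b \<ge> 3" for a b
    unfolding S_def using eig0[OF that] by simp
  define Fs where "Fs = Fp (real ps) (real qs)"
  define \<mu> where "\<mu> = Min (S ps qs)"
  have \<mu>in: "\<mu> \<in> S ps qs" unfolding \<mu>_def using fin zero[OF ps1 qs3] by (intro Min_in) auto
  have \<mu>le: "\<mu> \<le> x" if "x \<in> S ps qs" for x unfolding \<mu>_def using fin that by simp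
  have inS: "r \<in> S ps qs" if "r < -4" "Fs r = 0" for r
    unfolding S_def using eig_bwd[OF ps1 qs3 that(1)] that(2) unfolding Fs_def by simp
  have Fm4: "Fs (-4) > 0" unfolding Fs_def using Fstar_pos[OF qs9 b1 b2] .
  obtain z where z: "z < -4" "Fs z < 0" using Fp_neg_below unfolding Fs_def by blast
  obtain r where r: "z \<le> r" "r \<le> -4" "Fs r = 0"
    using root_between[of z "-4" "real ps" "real qs"] z Fm4 unfolding Fs_def by fastforce
  have r4: "r < -4" using r Fm4 by (cases "r = -4") auto
  have \<mu>4: "\<mu> < -4" using \<mu>le[OF inS[OF r4 r(3)]] r4 by linarith
  have F\<mu>: "Fs \<mu> = 0"
    using eig_fwd[OF ps1 qs3 \<mu>4] \<mu>in unfolding S_def Fs_def by simp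
  have below: "Fs y < 0" if y: "y < \<mu>" for y
  proof (rule ccontr)
    assume "\<not> Fs y < 0"
    hence ge: "Fs y \<ge> 0" by simp
    obtain z' where z': "z' < y" "Fs z' < 0" using Fp_neg_below unfolding Fs_def by blast
    obtain r' where r': "z' \<le> r'" "r' \<le> y" "Fs r' = 0"
      using root_between[of z' y "real ps" "real qs"] z' ge unfolding Fs_def by fastforce
    have "r' < -4" using r' y \<mu>4 by linarith
    from \<mu>le[OF inS[OF this r'(3)]] show False using r' y by linarith
  qed
  have others: "\<mu> < x" if pne: "p \<noteq> ps" and x: "x \<in> S p q" for x
  proof (rule ccontr)
    assume "\<not> \<mu> < x"
    hence xle: "x \<le> \<mu>" by simp
    hence x4: "x < -4" using \<mu>4 by linarith
    have Fx: "Fp (real p) (real q) x = 0"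
      using eig_fwd[OF assms(2) assms(3) x4] x unfolding S_def by simp
    have "Fs x \<le> 0" using below[of x] F\<mu> xle by (cases "x = \<mu>") auto
    moreover have "Fp (real p) (real q) x < Fs x"
      unfolding Fs_def by (rule Fp_compare[OF x4 sum_eq pne b1 b2])
    ultimately show False using Fx by linarith
  qed
  show ?thesis
  proof (cases "p = ps")
    case True
    hence "q = qs" using sum_eq by simp
    thus ?thesis using True unfolding ps_def qs_def by simp
  next
    case False
    have "Min (S p q) \<in> S p q" using fin zero[OF assms(2) assms(3)] by (intro Min_in) auto
    hence gt: "\<mu> < Min (S p q)" using others[OF False] by blast
    have g: "lambda_min n (compl_graph (U_graph ((n-1) div 2) ((n-2) div 2))) = Min (S ps qs)"
      using lms unfolding ps_def qs_def .
    have F': "p \<noteq> (n-1) div 2" using False unfolding ps_def .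
    show ?thesis unfolding g lm using gt F' unfolding \<mu>_def by auto
  qed
qed


end
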